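(* Fix $n\in\{1,\dots,N\}$ and write $U(y,t)=U(v_n,y,t)$. Then for $t\in[0,1)$: $U_t+\beta(U(y+1,t)-2U(y,t)+U(y-1,t))=0$ for $y>\overline m_n$ or $y<\underline m_n$; $U_t+\beta(U(y+1,t)-2U(y,t)+U(y-1,t))=(p(\underline m_n,t)-v_n)\beta$ for $y=\overline m_n$; $U_t+\beta(U(y+1,t)-2U(y,t)+U(y-1,t))=(v_n-p(\overline m_n,t))\beta$ for $y=\underline m_n$; $U(y,t)-U(y+1,t)-(v_n-p(y,t))=0$ for $y\ge\overline m_n$; $U(y,t)-U(y-1,t)+(v_n-p(y,t))=0$ for $y\le\underline m_n$.
   Context: Order size $1$, $N<\infty$, $v_1<\dots<v_N$. $Z$ is the difference of two independent Poisson processes with intensity $\beta>0$; $\mathbb{E}^y$ denotes expectation with $Z_0=y$. Strictly increasing $(a_n)_{n=1}^{N+1}\subset\mathbb{Z}\cup\{\pm\infty\}$, $a_1=-\infty$, $a_{N+1}=\infty$, $\bigcup_n[a_n,a_{n+1})=\mathbb{Z}\cup\{-\infty\}$, $m_n=(a_n+a_{n+1}-1)/2\notin\mathbb{Z}$, $\underline m_n=\lfloor m_n\rfloor$, $\overline m_n=\lceil m_n\rceil$ (with $\underline m_1=\overline m_1=-\infty$, $\underline m_N=\overline m_N=+\infty$). $P(y)=v_n$ for $y\in[a_n,a_{n+1})$; $p(y,t)=\mathbb{E}^y[P(Z_{1-t})]$; $A(y)=P(y+1)$, $B(y)=P(y-1)$. $U(v_n,y,1)=\sum_{j=y}^{a_n-1}(v_n-A(j))\mathbf{1}_{\{y\le\underline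 m_n\}}+\sum_{j=a_{n+1}}^y(B(j)-v_n)\mathbf{1}_{\{y\ge\overline m_n\}}$ (empty sums $0$); for $t<1$, $U(v_n,y,t)=U(v_n,y,1)+\beta\int_t^1(p(y,r)-p(y-1,r))dr$ if $y\ge\overline m_n$, and $U(v_n,y,t)=U(v_n,y,1)+\beta\int_t^1(p(y+1,r)-p(y,r))dr$ if $y\le\underline m_n$. *)

theory Defs
  imports "HOL-Analysis.Analysis" "HOL-Probability.Probability"
begin

definition aE :: "nat \<Rightarrow> (nat \<Rightarrow> int) \<Rightarrow> nat \<Rightarrow> ereal" where
  "aE N a k = (if k \<le> 1 then -\<infinity> else if k \<ge> N + 1 then \<infinity> else ereal (real_of_int (a k)))"

definition Pf :: "nat \<Rightarrow> (nat \<Rightarrow> real) \<Rightarrow> (nat \<Rightarrow> int) \<Rightarrow> int \<Rightarrow> real" where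
  "Pf N v a y = v (THE n. n \<in> {1..N} \<and> aE N a n \<le> ereal (real_of_int y) \<and> ereal (real_of_int y) < aE N a (Suc n))"

text \<open>p(y,t) = E^y[P(Z_(1-t))], Z = N1 - N2 with N1,N2 independent Poisson processes of
  intensity beta, so Z_s - Z_0 = N1_s - N2_s with N1_s, N2_s iid Poisson(beta s); Z_0 = y.\<close>
definition pf :: "real \<Rightarrow> nat \<Rightarrow> (nat \<Rightarrow> real) \<Rightarrow> (nat \<Rightarrow> int) \<Rightarrow> int \<Rightarrow> real \<Rightarrow> real" where
  "pf \<beta> N v a y t = (if 1 - t \<le> 0 then Pf N v a y
     else measure_pmf.expectation
            (pair_pmf (poisson_pmf (\<beta> * (1 - t))) (poisson_pmf (\<beta> * (1 - t))))
            (\<lambda>(j, k). Pf N v a (y + int j - int k)))"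

definition mlo :: "nat \<Rightarrow> (nat \<Rightarrow> int) \<Rightarrow> nat \<Rightarrow> ereal" where
  "mlo N a n = (if n = 1 then -\<infinity> else if n = N then \<infinity>
     else ereal (real_of_int \<lfloor>(real_of_int (a n) + real_of_int (a (Suc n)) - 1) / 2\<rfloor>))"

definition mup :: "nat \<Rightarrow> (nat \<Rightarrow> int) \<Rightarrow> nat \<Rightarrow> ereal" where
  "mup N a n = (if n = 1 then -\<infinity> else if n = N then \<infinity>
     else ereal (real_of_int \<lceil>(real_of_int (a n) + real_of_int (a (Suc n)) - 1) / 2\<rceil>))"

definition U1 :: "nat \<Rightarrow> (nat \<Rightarrow> real) \<Rightarrow> (nat \<Rightarrow> int) \<Rightarrow> nat \<Rightarrow> int \<Rightarrow> real" where
  "U1 N v a n y =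
     (if ereal (real_of_int y) \<le> mlo N a n then
        (\<Sum>j\<in>{j. y \<le> j \<and> ereal (real_of_int j) < aE N a n}. v n - Pf N v a (j + 1)) else 0)
   + (if ereal (real_of_int y) \<ge> mup N a n then
        (\<Sum>j\<in>{j. aE N a (Suc n) \<le> ereal (real_of_int j) \<and> j \<le> y}. Pf N v a (j - 1) - v n) else 0)"

definition Uf :: "real \<Rightarrow> nat \<Rightarrow> (nat \<Rightarrow> real) \<Rightarrow> (nat \<Rightarrow> int) \<Rightarrow> nat \<Rightarrow> int \<Rightarrow> real \<Rightarrow> real" where
  "Uf \<beta> N v a n y t =
     U1 N v a n y
     + (if ereal (real_of_int y) \<ge> mup N a n then
          \<beta> * integral {t..1} (\<lambda>r. pf \<beta> N v a y r - pf \<beta> N v a (y - 1) r)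
        else if ereal (real_of_int y) \<le> mlo N a n then
          \<beta> * integral {t..1} (\<lambda>r. pf \<beta> N v a (y + 1) r - pf \<beta> N v a y r)
        else 0)"

end

theory Submission
  imports Defs
begin


definition cc :: "(int \<Rightarrow> real) \<Rightarrow> nat \<Rightarrow> int \<Rightarrow> real" where
  "cc g n y = (\<Sum>j\<le>n. real (n choose j) * g (y + 2 * int j - int n))"

lemma cc_Suc: "cc g (Suc n) y = cc g n (y + 1) + cc g n (y - 1)"
proof -
  define f where "f = (\<lambda>j::nat. g (y + 2 * int j - int (Suc n)))"
  have A: "cc g (Suc n) y = (\<Sum>j\<le>Suc n. real (Suc n choose j) * f j)"
    by (simp add: cc_def f_def)
  have A2: "(\<Sum>j\<le>Suc n. real (Suc n choose j) * f j) = f 0 + (\<Sum>j\<le>n. real (n choose j) * f (Suc j)) + (\<Sum>j\<le>n. real (n choose Suc j) * f (Suc j))"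
    by (subst sum.atMost_Suc_shift) (simp add: sum.distrib algebra_simps)
  have A3: "f 0 + (\<Sum>j\<le>n. real (n choose Suc j) * f (Suc j)) = (\<Sum>j\<le>Suc n. real (n choose j) * f j)"
    by (simp only: sum.atMost_Suc_shift) simp
  have A4: "(\<Sum>j\<le>Suc n. real (n choose j) * f j) = (\<Sum>j\<le>n. real (n choose j) * f j)"
    by simp
  have C: "(\<Sum>j\<le>n. real (n choose j) * f (Suc j)) = cc g n (y + 1)"
    unfolding cc_def f_def by (intro sum.cong refl) (simp add: algebra_simps)
  have D: "(\<Sum>j\<le>n. real (n choose j) * f j) = cc g n (y - 1)"
    unfolding cc_def f_def by (intro sum.cong refl) (simp add: algebra_simps)
  show ?thesis using A A2 A3 A4 C D by linarith
qed

lemma cc_bound: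
  assumes "\<And>x. \<bar>g x\<bar> \<le> M"
  shows "\<bar>cc g n y\<bar> \<le> 2 ^ n * M"
proof -
  have "\<bar>cc g n y\<bar> \<le> (\<Sum>j\<le>n. \<bar>real (n choose j) * g (y + 2 * int j - int n)\<bar>)"
    unfolding cc_def by (rule sum_abs)
  also have "\<dots> \<le> (\<Sum>j\<le>n. real (n choose j) * M)"
    by (intro sum_mono) (simp add: abs_mult assms mult_left_mono)
  also have "\<dots> = 2 ^ n * M"
    by (simp add: sum_distrib_right[symmetric] choose_row_sum flip: of_nat_sum)
  finally show ?thesis .
qed

definition FF :: "(int \<Rightarrow> real) \<Rightarrow> int \<Rightarrow> real \<Rightarrow> real" where
  "FF g y u = (\<Sum>n. cc g n y / fact n * u ^ n)"

lemma FF_summable: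
  assumes "\<And>x. \<bar>g x\<bar> \<le> M"
  shows "summable (\<lambda>n. cc g n y / fact n * u ^ n)"
proof (rule summable_comparison_test[where g = "\<lambda>n. M * (inverse (fact n) * (2 * \<bar>u\<bar>) ^ n)"])
  show "summable (\<lambda>n. M * (inverse (fact n) * (2 * \<bar>u\<bar>) ^ n))"
    by (intro summable_mult summable_exp)
  show "\<exists>N. \<forall>n\<ge>N. norm (cc g n y / fact n * u ^ n) \<le> M * (inverse (fact n) * (2 * \<bar>u\<bar>) ^ n)"
  proof (intro exI allI impI)
    fix n :: nat
    have "norm (cc g n y / fact n * u ^ n) = \<bar>cc g n y\<bar> * (inverse (fact n) * \<bar>u\<bar> ^ n)"
      by (simp add: abs_mult power_abs divide_inverse)
    also have "\<dots> \<le> (2 ^ n * M) * (inverse (fact n) * \<bar>u\<bar> ^ n)"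
      by (intro mult_right_mono cc_bound assms) simp
    also have "\<dots> = M * (inverse (fact n) * (2 * \<bar>u\<bar>) ^ n)"
      by (simp add: power_mult_distrib)
    finally show "norm (cc g n y / fact n * u ^ n) \<le> M * (inverse (fact n) * (2 * \<bar>u\<bar>) ^ n)" .
  qed
qed

lemma FF_deriv:
  assumes "\<And>x. \<bar>g x\<bar> \<le> M"
  shows "(FF g y has_field_derivative (FF g (y + 1) u + FF g (y - 1) u)) (at u)"
proof -
  have D0: "((\<lambda>x. \<Sum>n. (cc g n y / fact n) * x^n) has_field_derivative (\<Sum>n. diffs (\<lambda>n. cc g n y / fact n) n * u^n)) (at u)"
    by (rule termdiffs_strong_converges_everywhere) (rule FF_summable[OF assms])
  have F2: "(\<lambda>n. diffs (\<lambda>n. cc g n y / fact n) n * u^n) =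
      (\<lambda>n. cc g n (y+1) / fact n * u ^ n + cc g n (y-1) / fact n * u ^ n)"
    by (rule ext) (simp add: diffs_def cc_Suc field_simps del: of_nat_Suc)
  have F3: "(\<Sum>n. cc g n (y+1) / fact n * u ^ n + cc g n (y-1) / fact n * u ^ n) = FF g (y + 1) u + FF g (y - 1) u"
    unfolding FF_def by (intro suminf_add[symmetric] FF_summable[OF assms])
  have eq: "(\<Sum>n. diffs (\<lambda>n. cc g n y / fact n) n * u^n) = FF g (y + 1) u + FF g (y - 1) u"
    unfolding F2 by (rule F3)
  have E: "(\<lambda>x. \<Sum>n. (cc g n y / fact n) * x^n) = FF g y"
    by (rule ext) (simp add: FF_def)
  show ?thesis using D0 unfolding eq E .
qed

definition GG :: "(int \<Rightarrow> real) \<Rightarrow> int \<Rightarrow> real \<Rightarrow> real" where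
  "GG g y u = exp (-2 * u) * FF g y u"

lemma GG_deriv:
  assumes "\<And>x. \<bar>g x\<bar> \<le> M"
  shows "(GG g y has_field_derivative (GG g (y + 1) u - 2 * GG g y u + GG g (y - 1) u)) (at u)"
proof -
  have e: "((\<lambda>u. exp (-2 * u)) has_field_derivative exp (-2 * u) * (-2)) (at u)"
    by (auto intro!: derivative_eq_intros)
  from DERIV_mult[OF e FF_deriv[OF assms, where y=y and u=u]] show ?thesis
    unfolding GG_def[abs_def] by (rule DERIV_cong) (simp add: algebra_simps)
qed

lemma GG_0: "GG g y 0 = g y"
  unfolding GG_def FF_def using powser_zero[of "\<lambda>n. cc g n y / fact n"] by (simp add: cc_def)



no_notation Infinite_Sum.abs_summable_on (infixr \<open>abs'_summable'_on\<close> 46)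


lemma link:
  assumes bd: "\<And>x. \<bar>g x\<bar> \<le> M" and u: "u > 0"
  shows "measure_pmf.expectation (pair_pmf (poisson_pmf u) (poisson_pmf u))
           (\<lambda>(j, k). g (y + int j - int k)) = GG g y u"
proof -
  define T where "T = (\<lambda>(j::nat, k::nat). u ^ j / fact j * exp (-u) * (u ^ k / fact k * exp (-u)) * g (y + int j - int k))"
  define p where "p = pair_pmf (poisson_pmf u) (poisson_pmf u)"
  have pT: "pmf p x * (case x of (j, k) \<Rightarrow> g (y + int j - int k)) = T x" for x
    using u by (cases x) (simp add: p_def pmf_pair T_def)
  have E1: "measure_pmf.expectation p (\<lambda>(j, k). g (y + int j - int k)) = infsetsum T UNIV"
    by (simp add: pmf_expectation_eq_infsetsum pT)
  have sT: "T abs_summable_on UNIV"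
  proof (rule abs_summable_on_comparison_test'[where g = "\<lambda>x. M * pmf p x"])
    show "(\<lambda>x. M * pmf p x) abs_summable_on UNIV"
      by (intro abs_summable_on_cmult_right pmf_abs_summable)
    fix x
    have "norm (T x) = pmf p x * \<bar>case x of (j, k) \<Rightarrow> g (y + int j - int k)\<bar>"
      by (simp flip: pT add: abs_mult)
    also have "\<dots> \<le> pmf p x * M"
      by (intro mult_left_mono) (auto split: prod.split intro: bd)
    finally show "norm (T x) \<le> M * pmf p x" by (simp add: mult.commute)
  qed
  define \<phi> where "\<phi> = (\<lambda>(n::nat, j::nat). (j, n - j))"
  have bij: "bij_betw \<phi> (SIGMA n:UNIV. {..n}) UNIV"
    unfolding bij_betw_def
  proof
    show "inj_on \<phi> (SIGMA n:UNIV. {..n})"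
      by (auto simp: inj_on_def \<phi>_def)
    show "\<phi> ` (SIGMA n:UNIV. {..n}) = UNIV"
    proof (rule set_eqI, rule iffI)
      fix x :: "nat \<times> nat" 
      obtain j k where x: "x = (j, k)" by (cases x)
      have "x = \<phi> (j + k, j)" "(j + k, j) \<in> (SIGMA n:UNIV. {..n})"
        by (auto simp: x \<phi>_def)
      then show "x \<in> \<phi> ` (SIGMA n:UNIV. {..n})" by (rule rev_image_eqI[rotated])
    qed auto
  qed
  have sT2: "(\<lambda>x. T (\<phi> x)) abs_summable_on (SIGMA n:UNIV. {..n})"
    using abs_summable_on_reindex_bij_betw[OF bij, of T] sT by simp
  have E2: "infsetsum T UNIV = infsetsum (\<lambda>x. T (\<phi> x)) (SIGMA n:UNIV. {..n})"
    by (rule infsetsum_reindex_bij_betw[OF bij, symmetric])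
  have E3: "infsetsum (\<lambda>x. T (\<phi> x)) (SIGMA n:UNIV. {..n}) =
      infsetsum (\<lambda>n. infsetsum (\<lambda>j. T (\<phi> (n, j))) {..n}) UNIV"
    by (rule infsetsum_Sigma) (use sT2 in auto)
  have inner: "infsetsum (\<lambda>j. T (\<phi> (n, j))) {..n} = exp (-2 * u) * (cc g n y / fact n * u ^ n)" for n
  proof -
    have "infsetsum (\<lambda>j. T (\<phi> (n, j))) {..n} = (\<Sum>j\<le>n. T (\<phi> (n, j)))"
      by simp
    also have "\<dots> = (\<Sum>j\<le>n. exp (-2 * u) * (real (n choose j) * g (y + 2 * int j - int n) / fact n * u ^ n))"
    proof (intro sum.cong refl)
      fix j assume j: "j \<in> {..n}"
      then have jn: "j \<le> n" by simp
      have f: "real (n choose j) / fact n = 1 / (fact j * fact (n - j))"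
        using jn by (simp add: binomial_fact field_simps)
      have pw: "u ^ j * u ^ (n - j) = u ^ n"
        using jn by (simp flip: power_add)
      have ex: "exp (-u) * exp (-u) = exp (-2 * u)"
        by (simp flip: exp_add)
      have gi: "y + int j - int (n - j) = y + 2 * int j - int n"
        using jn by simp
      have "T (\<phi> (n, j)) = exp (-u) * exp (-u) * (u ^ j * u ^ (n - j)) / (fact j * fact (n - j)) * g (y + int j - int (n - j))"
        by (simp add: T_def \<phi>_def)
      also have "\<dots> = exp (-2 * u) * (real (n choose j) / fact n * u ^ n * g (y + 2 * int j - int n))"
        unfolding ex pw gi f by simp
      finally show "T (\<phi> (n, j)) = exp (-2 * u) * (real (n choose j) * g (y + 2 * int j - int n) / fact n * u ^ n)"
        by simp
    qed
    also have "\<dots> = exp (-2 * u) * (cc g n y / fact n * u ^ n)"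
      by (simp add: cc_def sum_distrib_left sum_distrib_right sum_divide_distrib)
    finally show ?thesis .
  qed
  have sO: "(\<lambda>n. exp (-2 * u) * (cc g n y / fact n * u ^ n)) abs_summable_on UNIV"
  proof -
    have "(\<lambda>n. infsetsum (\<lambda>j. T (\<phi> (n, j))) {..n}) abs_summable_on UNIV"
      by (rule abs_summable_on_Sigma_project1'[where f = "\<lambda>n j. T (\<phi> (n, j))"]) (use sT2 in auto)
    then show ?thesis by (simp add: inner)
  qed
  have E4: "infsetsum (\<lambda>n. exp (-2 * u) * (cc g n y / fact n * u ^ n)) UNIV
      = (\<Sum>n. exp (-2 * u) * (cc g n y / fact n * u ^ n))"
    by (rule infsetsum_nat'[OF sO])
  have E5: "(\<Sum>n. exp (-2 * u) * (cc g n y / fact n * u ^ n)) = GG g y u"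
    unfolding GG_def FF_def by (rule suminf_mult[OF FF_summable[OF bd]])
  show ?thesis
    using E1 E2 E3 E4 E5 inner unfolding p_def by simp
qed




context
  fixes N n :: nat and v :: "nat \<Rightarrow> real" and a :: "nat \<Rightarrow> int"
  assumes hN: "1 \<le> N"
    and ha: "strict_mono_on {2..N} a"
    and hm: "\<forall>k\<in>{2..N-1}. (real_of_int (a k) + real_of_int (a (Suc k)) - 1) / 2 \<notin> \<int>"
    and hn: "n \<in> {1..N}"
begin

lemma aE_mono: "1 \<le> k \<Longrightarrow> k < l \<Longrightarrow> l \<le> N + 1 \<Longrightarrow> aE N a k < aE N a l"
  using ha unfolding aE_def strict_mono_on_def by auto

lemma Pf_exists: "\<exists>k\<in>{1..N}. aE N a k \<le> ereal (real_of_int y) \<and> ereal (real_of_int y) < aE N a (Suc k)"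
proof -
  define K where "K = {k\<in>{1..N}. aE N a k \<le> ereal (real_of_int y)}"
  have "1 \<in> K" using hN by (simp add: K_def aE_def)
  have fK: "finite K" by (simp add: K_def)
  define k where "k = Max K"
  have kK: "k \<in> K" using fK \<open>1 \<in> K\<close> k_def by (metis Max_in empty_iff)
  have "ereal (real_of_int y) < aE N a (Suc k)"
  proof (rule ccontr)
    assume nl: "\<not> ereal (real_of_int y) < aE N a (Suc k)"
    show False
    proof (cases "Suc k \<le> N")
      case True
      then have "Suc k \<in> K" using nl by (auto simp: K_def not_less)
      then have "Suc k \<le> k" using fK k_def by simp
      then show False by simp
    next
      case False
      then have "aE N a (Suc k) = \<infinity>" using kK by (simp add: aE_def K_def)
      then show False using nl by simp
    qed
  qed
  then show ?thesis using kK by (auto simp: K_def)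
qed

lemma Pf_unique:
  assumes "k \<in> {1..N}" "aE N a k \<le> ereal (real_of_int y)" "ereal (real_of_int y) < aE N a (Suc k)"
    and "l \<in> {1..N}" "aE N a l \<le> ereal (real_of_int y)" "ereal (real_of_int y) < aE N a (Suc l)"
  shows "k = l"
proof (rule ccontr)
  assume "k \<noteq> l"
  then consider "k < l" | "l < k" by linarith
  then show False
  proof cases
    case 1
    then have "aE N a (Suc k) \<le> aE N a l"
      using aE_mono[of "Suc k" l] assms by (cases "Suc k = l") auto
    then show False using assms by auto
  next
    case 2
    then have "aE N a (Suc l) \<le> aE N a k"
      using aE_mono[of "Suc l" k] assms by (cases "Suc l = k") auto
    then show False using assms by auto
  qed
qed

lemma Pf_val:
  assumes "k \<in> {1..N}" "aE N a k \<le> ereal (real_of_int y)" "ereal (real_of_int y) < aE N a (Suc k)"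
  shows "Pf N v a y = v k"
proof -
  have "(THE k. k \<in> {1..N} \<and> aE N a k \<le> ereal (real_of_int y) \<and> ereal (real_of_int y) < aE N a (Suc k)) = k"
    using assms Pf_unique by blast
  then show ?thesis by (simp add: Pf_def)
qed

lemma Pf_bounded: "\<exists>M. \<forall>y. \<bar>Pf N v a y\<bar> \<le> M"
proof -
  have "\<bar>Pf N v a y\<bar> \<le> (\<Sum>k\<in>{1..N}. \<bar>v k\<bar>)" for y
  proof -
    obtain k where k: "k \<in> {1..N}" "aE N a k \<le> ereal (real_of_int y)" "ereal (real_of_int y) < aE N a (Suc k)"
      using Pf_exists by blast
    have "\<bar>v k\<bar> \<le> (\<Sum>k\<in>{1..N}. \<bar>v k\<bar>)"
      by (rule member_le_sum) (use k in auto)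
    then show ?thesis using Pf_val[OF k] by simp
  qed
  then show ?thesis by blast
qed

lemma mid_facts:
  assumes "1 < n" "n < N"
  shows "\<exists>lo. a n < a (Suc n) \<and> a n \<le> lo \<and> lo + 1 \<le> a (Suc n) - 1 \<and>
    mlo N a n = ereal (real_of_int lo) \<and> mup N a n = ereal (real_of_int (lo + 1)) \<and>
    aE N a n = ereal (real_of_int (a n)) \<and> aE N a (Suc n) = ereal (real_of_int (a (Suc n)))"
proof -
  define m where "m \<equiv> (real_of_int (a n) + real_of_int (a (Suc n)) - 1) / 2"
  have lt: "a n < a (Suc n)" using ha assms(1,2) unfolding strict_mono_on_def by auto
  have 1: "a n \<le> \<lfloor>m\<rfloor>" using lt by (simp add: le_floor_iff m_def)
  have "m \<le> real_of_int (a (Suc n) - 1)" using lt by (simp add: m_def)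
  then have 2: "\<lceil>m\<rceil> \<le> a (Suc n) - 1" by (simp only: ceiling_le_iff)
  have nI: "m \<notin> \<int>" using hm assms(1,2) unfolding m_def by auto
  have "real_of_int \<lfloor>m\<rfloor> \<noteq> m" using nI by (metis Ints_of_int)
  then have "real_of_int \<lfloor>m\<rfloor> < m" using of_int_floor_le[of m] by linarith
  then have 3: "\<lceil>m\<rceil> = \<lfloor>m\<rfloor> + 1"
    using real_of_int_floor_add_one_gt[of m] by (intro ceiling_unique) simp_all
  have 4: "mlo N a n = ereal (real_of_int \<lfloor>m\<rfloor>)" "mup N a n = ereal (real_of_int \<lceil>m\<rceil>)"
    using assms(1,2) by (simp_all add: mlo_def mup_def m_def)
  have 5: "aE N a n = ereal (real_of_int (a n))" "aE N a (Suc n) = ereal (real_of_int (a (Suc n)))"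
    using assms(1,2) by (simp_all add: aE_def)
  show ?thesis
    by (rule exI[of _ "\<lfloor>m\<rfloor>"]) (use lt 1 2 3 4 5 in simp)
qed

lemma ncases:
  obtains (L) "n = 1" "mlo N a n = -\<infinity>" "mup N a n = -\<infinity>" "aE N a n = -\<infinity>"
  | (R) "n = N" "n \<noteq> 1" "mlo N a n = \<infinity>" "mup N a n = \<infinity>" "aE N a (Suc n) = \<infinity>"
      "aE N a n = ereal (real_of_int (a n))"
  | (M) lo where "1 < n" "n < N" "a n < a (Suc n)" "a n \<le> lo" "lo + 1 \<le> a (Suc n) - 1"
    "mlo N a n = ereal (real_of_int lo)" "mup N a n = ereal (real_of_int (lo + 1))"
    "aE N a n = ereal (real_of_int (a n))" "aE N a (Suc n) = ereal (real_of_int (a (Suc n)))"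
proof -
  consider "n = 1" | "n = N" "n \<noteq> 1" | "1 < n" "n < N" using hn by fastforce
  then show ?thesis
  proof cases
    case 1 then show ?thesis using L by (simp add: mlo_def mup_def aE_def)
  next
    case 2 then show ?thesis using R hn by (simp add: mlo_def mup_def aE_def)
  next
    case 3 then show ?thesis using M mid_facts by blast
  qed
qed

lemma D_gt: assumes p: "mup N a n < ereal (real_of_int y)" shows "mup N a n \<le> ereal (real_of_int (y - 1))"
proof (cases rule: ncases)
  case (M lo)
  have "lo + 1 < y" using p unfolding M(7) by (simp only: less_ereal.simps(1) of_int_less_iff)
  then have "lo + 1 \<le> y - 1" by simp
  then show ?thesis unfolding M(7) by (simp only: ereal_less_eq(3) of_int_le_iff)
qed (use p in auto)

lemma D_lt: assumes p: "ereal (real_of_int y) < mlo N a n" shows "ereal (real_of_int (y + 1)) \<le> mlo N a n"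
proof (cases rule: ncases)
  case (M lo)
  have "y < lo" using p unfolding M(6) by (simp only: less_ereal.simps(1) of_int_less_iff)
  then have "y + 1 \<le> lo" by simp
  then show ?thesis unfolding M(6) by (simp only: ereal_less_eq(3) of_int_le_iff)
qed (use p in auto)

lemma D_up:
  assumes y: "mup N a n \<le> ereal (real_of_int y)"
  shows "\<not> ereal (real_of_int y) \<le> mlo N a n"
    "U1 N v a n y - U1 N v a n (y + 1) = v n - Pf N v a y"
proof -
  define S where "S = (\<lambda>y. {j. aE N a (Suc n) \<le> ereal (real_of_int j) \<and> j \<le> y})"
  have U1y: "U1 N v a n z = (\<Sum>j\<in>S z. Pf N v a (j - 1) - v n)"
    if "mup N a n \<le> ereal (real_of_int z)" "\<not> ereal (real_of_int z) \<le> mlo N a n" for z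
    using that by (simp add: U1_def S_def)
  have ins: "U1 N v a n y - U1 N v a n (y + 1) = v n - Pf N v a y"
    if "U1 N v a n y = (\<Sum>j\<in>S y. Pf N v a (j - 1) - v n)"
       "U1 N v a n (y + 1) = (\<Sum>j\<in>S (y + 1). Pf N v a (j - 1) - v n)"
       "aE N a (Suc n) = ereal (real_of_int A)" "aE N a n \<le> ereal (real_of_int y)" for A
  proof (cases "A \<le> y + 1")
    case False
    have "Pf N v a y = v n"
      by (rule Pf_val) (use hn that(3,4) False in auto)
    moreover have "S y = {}" "S (y + 1) = {}" using False by (auto simp: S_def that(3))
    ultimately show ?thesis using that(1,2) by simp
  next
    case True
    have Sz: "S z = {A..z}" for z by (auto simp: S_def that(3))
    have "S (y + 1) = insert (y + 1) (S y)" using True by (auto simp: Sz)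
    moreover have "y + 1 \<notin> S y" "finite (S y)" by (auto simp: Sz)
    ultimately show ?thesis using that(1,2) by simp
  qed
  have "\<not> ereal (real_of_int y) \<le> mlo N a n \<and> U1 N v a n y - U1 N v a n (y + 1) = v n - Pf N v a y"
  proof (cases rule: ncases)
    case L
    show ?thesis
    proof (cases "N = 1")
      case True
      have "S z = {}" for z by (auto simp: S_def aE_def L True)
      moreover have "Pf N v a y = v n"
        by (rule Pf_val) (use hn L True in \<open>auto simp: aE_def\<close>)
      ultimately show ?thesis using U1y[of y] U1y[of "y+1"] L by simp
    next
      case False
      then have "aE N a (Suc n) = ereal (real_of_int (a (Suc n)))" using L hn by (simp add: aE_def)
      from ins[OF _ _ this] show ?thesis using U1y[of y] U1y[of "y+1"] L by simp
    qed
  next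
    case R then show ?thesis using y by simp
  next
    case (M lo)
    have y1: "mup N a n \<le> ereal (real_of_int (y + 1))" "\<not> ereal (real_of_int (y+1)) \<le> mlo N a n"
      "\<not> ereal (real_of_int y) \<le> mlo N a n" "aE N a n \<le> ereal (real_of_int y)"
      using y M by auto
    from ins[OF U1y[OF y y1(3)] U1y[OF y1(1,2)] M(9) y1(4)] show ?thesis using y1 by simp
  qed
  then show "\<not> ereal (real_of_int y) \<le> mlo N a n"
    "U1 N v a n y - U1 N v a n (y + 1) = v n - Pf N v a y" by auto
qed

lemma D_lo:
  assumes y: "ereal (real_of_int y) \<le> mlo N a n"
  shows "\<not> mup N a n \<le> ereal (real_of_int y)"
    "U1 N v a n y - U1 N v a n (y - 1) = Pf N v a y - v n"
proof -
  define S where "S = (\<lambda>y. {j. y \<le> j \<and> ereal (real_of_int j) < aE N a n})"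
  have U1y: "U1 N v a n z = (\<Sum>j\<in>S z. v n - Pf N v a (j + 1))"
    if "ereal (real_of_int z) \<le> mlo N a n" "\<not> mup N a n \<le> ereal (real_of_int z)" for z
    using that by (simp add: U1_def S_def)
  have ins: "U1 N v a n y - U1 N v a n (y - 1) = Pf N v a y - v n"
    if "U1 N v a n y = (\<Sum>j\<in>S y. v n - Pf N v a (j + 1))"
       "U1 N v a n (y - 1) = (\<Sum>j\<in>S (y - 1). v n - Pf N v a (j + 1))"
       "aE N a n = ereal (real_of_int A)" "ereal (real_of_int y) < aE N a (Suc n)" for A
  proof (cases "y - 1 < A")
    case False
    have "Pf N v a y = v n"
      by (rule Pf_val) (use hn that(3,4) False in auto)
    moreover have "S y = {}" "S (y - 1) = {}" using False by (auto simp: S_def that(3))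
    ultimately show ?thesis using that(1,2) by simp
  next
    case True
    have Sz: "S z = {z..<A}" for z by (auto simp: S_def that(3))
    have "S (y - 1) = insert (y - 1) (S y)" using True by (auto simp: Sz)
    moreover have "y - 1 \<notin> S y" "finite (S y)" by (auto simp: Sz)
    ultimately show ?thesis using that(1,2) by simp
  qed
  have "\<not> mup N a n \<le> ereal (real_of_int y) \<and> U1 N v a n y - U1 N v a n (y - 1) = Pf N v a y - v n"
  proof (cases rule: ncases)
    case L then show ?thesis using y by simp
  next
    case R
    from ins[OF _ _ R(6)] show ?thesis using U1y[of y] U1y[of "y - 1"] R by simp
  next
    case (M lo)
    have y1: "ereal (real_of_int (y - 1)) \<le> mlo N a n" "\<not> mup N a n \<le> ereal (real_of_int (y - 1))"
      "\<not> mup N a n \<le> ereal (real_of_int y)" "ereal (real_of_int y) < aE N a (Suc n)"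
      using y M by auto
    from ins[OF U1y[OF y y1(3)] U1y[OF y1(1,2)] M(8) y1(4)] show ?thesis using y1 by simp
  qed
  then show "\<not> mup N a n \<le> ereal (real_of_int y)"
    "U1 N v a n y - U1 N v a n (y - 1) = Pf N v a y - v n" by auto
qed

lemma D_mid:
  assumes y: "ereal (real_of_int y) = mup N a n"
  shows "ereal (real_of_int (y - 1)) = mlo N a n" "U1 N v a n y = 0" "U1 N v a n (y - 1) = 0"
proof -
  obtain lo where M: "1 < n" "n < N" "a n < a (Suc n)" "a n \<le> lo" "lo + 1 \<le> a (Suc n) - 1"
    "mlo N a n = ereal (real_of_int lo)" "mup N a n = ereal (real_of_int (lo + 1))"
    "aE N a n = ereal (real_of_int (a n))" "aE N a (Suc n) = ereal (real_of_int (a (Suc n)))"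
    using y by (cases rule: ncases) auto
  have yl: "y = lo + 1" using y M(7) by simp
  show "ereal (real_of_int (y - 1)) = mlo N a n" using yl M(6) by simp
  have E1: "{j. aE N a (Suc n) \<le> ereal (real_of_int j) \<and> j \<le> y} = {}"
    using yl M(5,9) by auto
  have n1: "\<not> ereal (real_of_int y) \<le> mlo N a n" using yl M(6) by simp
  have U: "U1 N v a n y = (\<Sum>j\<in>{j. aE N a (Suc n) \<le> ereal (real_of_int j) \<and> j \<le> y}. Pf N v a (j - 1) - v n)"
    using n1 y by (simp add: U1_def)
  show "U1 N v a n y = 0" unfolding U E1 by simp
  have E2: "{j. y - 1 \<le> j \<and> ereal (real_of_int j) < aE N a n} = {}"
    using yl M(4,8) by auto
  have n2: "\<not> mup N a n \<le> ereal (real_of_int (y - 1))" using yl M(7) by simp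
  have n3: "ereal (real_of_int (y - 1)) \<le> mlo N a n" using yl M(6) by simp
  have U': "U1 N v a n (y - 1) = (\<Sum>j\<in>{j. y - 1 \<le> j \<and> ereal (real_of_int j) < aE N a n}. v n - Pf N v a (j + 1))"
    using n2 n3 by (simp add: U1_def)
  show "U1 N v a n (y - 1) = 0" unfolding U' E2 by simp
qed

lemma D_mid2:
  assumes y: "ereal (real_of_int y) = mlo N a n"
  shows "ereal (real_of_int (y + 1)) = mup N a n"
  using y by (cases rule: ncases) auto

end



lemma GG_cont: assumes bd: "\<And>x. \<bar>g x\<bar> \<le> M" shows "continuous_on UNIV (GG g y)"
  by (intro continuous_at_imp_continuous_on ballI) (rule DERIV_isCont[OF GG_deriv[OF bd, where y=y]])

lemma pf_GG:
  assumes bd: "\<And>x. \<bar>Pf N v a x\<bar> \<le> M" and b: "\<beta> > 0" and t: "t \<le> 1"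
  shows "pf \<beta> N v a y t = GG (Pf N v a) y (\<beta> * (1 - t))"
proof (cases "t = 1")
  case True then show ?thesis by (simp add: pf_def GG_0)
next
  case False
  then have u: "\<beta> * (1 - t) > 0" using b t by simp
  have "\<not> 1 - t \<le> 0" using False t by simp
  then show ?thesis
    using link[OF bd u, where y=y] by (simp add: pf_def)
qed

lemma pf_cont:
  assumes bd: "\<And>x. \<bar>Pf N v a x\<bar> \<le> M" and b: "\<beta> > 0"
  shows "continuous_on {0..1} (\<lambda>r. pf \<beta> N v a y r)"
proof -
  have "continuous_on {0..1} (\<lambda>r. GG (Pf N v a) y (\<beta> * (1 - r)))"
    by (rule continuous_on_compose2[OF GG_cont[OF bd]]) (auto intro!: continuous_intros)
  then show ?thesis
    by (rule continuous_on_eq) (use pf_GG[OF bd b] in auto)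
qed




lemma KOL:
  assumes bd: "\<And>x. \<bar>Pf N v a x\<bar> \<le> M" and b: "\<beta> > 0" and t: "t \<le> 1"
  shows "((\<lambda>r. \<beta> * (2 * pf \<beta> N v a y r - pf \<beta> N v a (y + 1) r - pf \<beta> N v a (y - 1) r))
          has_integral (Pf N v a y - pf \<beta> N v a y t)) {t..1}"
proof -
  define g where "g = Pf N v a"
  define \<phi> where "\<phi> = (\<lambda>r. GG g y (\<beta> * (1 - r)))"
  define \<phi>' where "\<phi>' = (\<lambda>r. (GG g (y + 1) (\<beta> * (1 - r)) - 2 * GG g y (\<beta> * (1 - r)) + GG g (y - 1) (\<beta> * (1 - r))) * (- \<beta>))"
  have bd': "\<And>x. \<bar>g x\<bar> \<le> M" using bd by (simp add: g_def)
  have d: "(\<phi> has_vector_derivative \<phi>' x) (at x within {t..1})" for x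
  proof -
    have i: "((\<lambda>r. \<beta> * (1 - r)) has_field_derivative (- \<beta>)) (at x)"
      by (auto intro!: derivative_eq_intros)
    have "(\<phi> has_field_derivative \<phi>' x) (at x)"
      unfolding \<phi>_def \<phi>'_def using DERIV_chain2[OF GG_deriv[OF bd'] i] by simp
    then have "(\<phi> has_vector_derivative \<phi>' x) (at x)"
      by (simp only: has_real_derivative_iff_has_vector_derivative)
    then show ?thesis
      by (rule has_vector_derivative_at_within)
  qed
  have F0: "(\<phi>' has_integral (\<phi> 1 - \<phi> t)) {t..1}"
    by (rule fundamental_theorem_of_calculus[OF t d])
  have E0: "\<phi> 1 - \<phi> t = Pf N v a y - pf \<beta> N v a y t"
    using pf_GG[OF bd b t, where y=y] by (simp add: \<phi>_def GG_0 g_def)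
  have EQ: "\<phi>' r = \<beta> * (2 * pf \<beta> N v a y r - pf \<beta> N v a (y + 1) r - pf \<beta> N v a (y - 1) r)"
    if "r \<in> {t..1}" for r
  proof -
    have r: "r \<le> 1" using that by simp
    show ?thesis unfolding \<phi>'_def g_def pf_GG[OF bd b r, where y=y] pf_GG[OF bd b r, where y="y+1"] pf_GG[OF bd b r, where y="y-1"]
      by (simp add: algebra_simps)
  qed
  show ?thesis
    by (rule has_integral_eq[OF EQ F0[unfolded E0]]) simp
qed




lemma DERIVINT:
  fixes f :: "real \<Rightarrow> real"
  assumes c: "continuous_on {0..1} f" and t: "t \<in> {0..1}"
  shows "((\<lambda>s. C + \<beta> * integral {s..1} f) has_real_derivative (- (\<beta> * f t))) (at t within {0..1})"
proof -
  have "((\<lambda>u. integral {0..u} f) has_vector_derivative f t) (at t within {0..1})"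
    by (rule integral_has_vector_derivative[OF c t])
  then have d: "((\<lambda>u. integral {0..u} f) has_real_derivative f t) (at t within {0..1})"
    by (simp add: has_real_derivative_iff_has_vector_derivative)
  have d2: "((\<lambda>s. C + \<beta> * (integral {0..1} f - integral {0..s} f)) has_real_derivative (- (\<beta> * f t))) (at t within {0..1})"
    using DERIV_add[OF DERIV_const[of C] DERIV_cmult[OF DERIV_diff[OF DERIV_const[of "integral {0..1} f"] d], of \<beta>]]
    by simp
  show ?thesis
  proof (rule has_field_derivative_transform_within[OF d2 zero_less_one t])
    fix s :: real assume s: "s \<in> {0..1}"
    have "integral {0..s} f + integral {s..1} f = integral {0..1} f"
      by (rule Henstock_Kurzweil_Integration.integral_combine) (use s in \<open>auto intro: integrable_continuous_interval c\<close>)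
    then have "integral {0..1} f - integral {0..s} f = integral {s..1} f" by linarith
    then show "C + \<beta> * (integral {0..1} f - integral {0..s} f) = C + \<beta> * integral {s..1} f"
      by simp
  qed
qed




lemma KOL2:
  assumes bd: "\<And>x. \<bar>Pf N v a x\<bar> \<le> M" and b: "\<beta> > 0" and t: "0 \<le> t" "t \<le> 1"
  shows "\<beta> * integral {t..1} (\<lambda>r. pf \<beta> N v a y r - pf \<beta> N v a (y - 1) r)
       - \<beta> * integral {t..1} (\<lambda>r. pf \<beta> N v a (y + 1) r - pf \<beta> N v a y r)
       = Pf N v a y - pf \<beta> N v a y t"
proof -
  have sub: "{t..1} \<subseteq> {0..1}" using t by auto
  have c: "continuous_on {t..1} (\<lambda>r. pf \<beta> N v a z r)" for z
    by (rule continuous_on_subset[OF pf_cont[OF bd b] sub])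
  have i1: "((\<lambda>r. pf \<beta> N v a y r - pf \<beta> N v a (y - 1) r) has_integral
      integral {t..1} (\<lambda>r. pf \<beta> N v a y r - pf \<beta> N v a (y - 1) r)) {t..1}"
    by (rule integrable_integral, rule integrable_continuous_interval, rule continuous_on_diff[OF c c])
  have i2: "((\<lambda>r. pf \<beta> N v a (y + 1) r - pf \<beta> N v a y r) has_integral
      integral {t..1} (\<lambda>r. pf \<beta> N v a (y + 1) r - pf \<beta> N v a y r)) {t..1}"
    by (rule integrable_integral, rule integrable_continuous_interval, rule continuous_on_diff[OF c c])
  have H: "((\<lambda>r. \<beta> * (pf \<beta> N v a y r - pf \<beta> N v a (y - 1) r) - \<beta> * (pf \<beta> N v a (y + 1) r - pf \<beta> N v a y r))
     has_integral (\<beta> * integral {t..1} (\<lambda>r. pf \<beta> N v a y r - pf \<beta> N v a (y - 1) r)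
       - \<beta> * integral {t..1} (\<lambda>r. pf \<beta> N v a (y + 1) r - pf \<beta> N v a y r))) {t..1}"
    by (rule has_integral_diff[OF has_integral_mult_right[OF i1] has_integral_mult_right[OF i2]])
  have fe: "(\<lambda>r. \<beta> * (pf \<beta> N v a y r - pf \<beta> N v a (y - 1) r) - \<beta> * (pf \<beta> N v a (y + 1) r - pf \<beta> N v a y r))
     = (\<lambda>r. \<beta> * (2 * pf \<beta> N v a y r - pf \<beta> N v a (y + 1) r - pf \<beta> N v a (y - 1) r))"
    by (rule ext) (simp add: algebra_simps)
  show ?thesis
    by (rule has_integral_unique[OF H[unfolded fe] KOL[OF bd b t(2)]])
qed




theorem lemma4p3:
  fixes \<beta> :: real and N n :: nat and v :: "nat \<Rightarrow> real" and a :: "nat \<Rightarrow> int"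
  assumes hN: "1 \<le> N"
    and hbeta: "\<beta> > 0"
    and hv: "strict_mono_on {1..N} v"
    and ha: "strict_mono_on {2..N} a"
    and hm: "\<forall>k\<in>{2..N-1}. (real_of_int (a k) + real_of_int (a (Suc k)) - 1) / 2 \<notin> \<int>"
    and hn: "n \<in> {1..N}"
  shows "\<forall>t\<in>{0..<1}. \<forall>y::int.
      (\<exists>D. ((\<lambda>s. Uf \<beta> N v a n y s) has_real_derivative D) (at t within {0..1})
         \<and> ((mup N a n < ereal (real_of_int y) \<or> ereal (real_of_int y) < mlo N a n) \<longrightarrow>
              D + \<beta> * (Uf \<beta> N v a n (y + 1) t - 2 * Uf \<beta> N v a n y t + Uf \<beta> N v a n (y - 1) t) = 0)
         \<and> (ereal (real_of_int y) = mup N a n \<longrightarrow>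
              D + \<beta> * (Uf \<beta> N v a n (y + 1) t - 2 * Uf \<beta> N v a n y t + Uf \<beta> N v a n (y - 1) t)
                = (pf \<beta> N v a (y - 1) t - v n) * \<beta>)
         \<and> (ereal (real_of_int y) = mlo N a n \<longrightarrow>
              D + \<beta> * (Uf \<beta> N v a n (y + 1) t - 2 * Uf \<beta> N v a n y t + Uf \<beta> N v a n (y - 1) t)
                = (v n - pf \<beta> N v a (y + 1) t) * \<beta>))
      \<and> (ereal (real_of_int y) \<ge> mup N a n \<longrightarrow>
           Uf \<beta> N v a n y t - Uf \<beta> N v a n (y + 1) t - (v n - pf \<beta> N v a y t) = 0)
      \<and> (ereal (real_of_int y) \<le> mlo N a n \<longrightarrow>
           Uf \<beta> N v a n y t - Uf \<beta> N v a n (y - 1) t + (v n - pf \<beta> N v a y t) = 0)"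
proof (intro ballI allI)
  fix t :: real and y :: int
  assume t: "t \<in> {0..<1}"
  then have t0: "0 \<le> t" and t1: "t \<le> 1" by auto
  obtain M where bd: "\<And>x. \<bar>Pf N v a x\<bar> \<le> M" using Pf_bounded[OF hN ha hm hn] by blast
  note KO = KOL2[OF bd hbeta t0 t1]
  have DU: "Uf \<beta> N v a n z t - Uf \<beta> N v a n (z + 1) t = v n - pf \<beta> N v a z t"
    if z: "mup N a n \<le> ereal (real_of_int z)" for z
  proof -
    note d = D_up(1)[OF hN ha hm hn z] D_up(2)[OF hN ha hm hn z, of v]
    have z1: "mup N a n \<le> ereal (real_of_int (z + 1))"
    proof -
      have "ereal (real_of_int z) \<le> ereal (real_of_int (z + 1))" by simp
      with z show ?thesis by (rule order_trans)
    qed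
    have "Uf \<beta> N v a n z t = U1 N v a n z + \<beta> * integral {t..1} (\<lambda>r. pf \<beta> N v a z r - pf \<beta> N v a (z - 1) r)"
      using z by (simp add: Uf_def)
    moreover have "Uf \<beta> N v a n (z + 1) t = U1 N v a n (z + 1) + \<beta> * integral {t..1} (\<lambda>r. pf \<beta> N v a (z + 1) r - pf \<beta> N v a z r)"
      using z1 by (simp add: Uf_def)
    ultimately show ?thesis using d(2) KO[of z] by linarith
  qed
  have DL: "Uf \<beta> N v a n z t - Uf \<beta> N v a n (z - 1) t = pf \<beta> N v a z t - v n"
    if z: "ereal (real_of_int z) \<le> mlo N a n" for z
  proof -
    note d = D_lo(1)[OF hN ha hm hn z] D_lo(2)[OF hN ha hm hn z, of v]
    have z1: "ereal (real_of_int (z - 1)) \<le> mlo N a n"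
    proof -
      have "ereal (real_of_int (z - 1)) \<le> ereal (real_of_int z)" by simp
      then show ?thesis using z by (rule order_trans)
    qed
    have z2: "\<not> mup N a n \<le> ereal (real_of_int (z - 1))"
      using D_lo(1)[OF hN ha hm hn z1] .
    have "Uf \<beta> N v a n z t = U1 N v a n z + \<beta> * integral {t..1} (\<lambda>r. pf \<beta> N v a (z + 1) r - pf \<beta> N v a z r)"
      using z d(1) by (simp add: Uf_def)
    moreover have "Uf \<beta> N v a n (z - 1) t = U1 N v a n (z - 1) + \<beta> * integral {t..1} (\<lambda>r. pf \<beta> N v a z r - pf \<beta> N v a (z - 1) r)"
      using z1 z2 by (simp add: Uf_def)
    ultimately show ?thesis using d(2) KO[of z] by linarith
  qed
  have EQ: "Uf \<beta> N v a n (z - 1) t = Uf \<beta> N v a n z t"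
    if z: "ereal (real_of_int z) = mup N a n" for z
  proof -
    note d = D_mid(1)[OF hN ha hm hn z] D_mid(2)[OF hN ha hm hn z, of v] D_mid(3)[OF hN ha hm hn z, of v]
    have z0: "mup N a n \<le> ereal (real_of_int z)" using z by simp
    have z2: "\<not> mup N a n \<le> ereal (real_of_int (z - 1))"
      using D_lo(1)[OF hN ha hm hn, of "z - 1"] d(1) by simp
    have "Uf \<beta> N v a n z t = \<beta> * integral {t..1} (\<lambda>r. pf \<beta> N v a z r - pf \<beta> N v a (z - 1) r)"
      using z0 d(2) by (simp add: Uf_def)
    moreover have "Uf \<beta> N v a n (z - 1) t = \<beta> * integral {t..1} (\<lambda>r. pf \<beta> N v a z r - pf \<beta> N v a (z - 1) r)"
      using z2 d(1,3) by (simp add: Uf_def)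
    ultimately show ?thesis by simp
  qed
  have cont: "continuous_on {0..1} (\<lambda>r. pf \<beta> N v a z r - pf \<beta> N v a w r)" for z w
    by (intro continuous_on_diff pf_cont[OF bd hbeta])
  have t01: "t \<in> {0..1}" using t by auto
  obtain D where HD: "((\<lambda>s. Uf \<beta> N v a n y s) has_real_derivative D) (at t within {0..1})"
    and Dup: "mup N a n \<le> ereal (real_of_int y) \<Longrightarrow> D = - (\<beta> * (pf \<beta> N v a y t - pf \<beta> N v a (y - 1) t))"
    and Dlo: "ereal (real_of_int y) \<le> mlo N a n \<Longrightarrow> D = - (\<beta> * (pf \<beta> N v a (y + 1) t - pf \<beta> N v a y t))"
  proof (cases "mup N a n \<le> ereal (real_of_int y)")
    case True
    have "(\<lambda>s. Uf \<beta> N v a n y s) = (\<lambda>s. U1 N v a n y + \<beta> * integral {s..1} (\<lambda>r. pf \<beta> N v a y r - pf \<beta> N v a (y - 1) r))"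
      using True by (simp add: Uf_def)
    have nl: "\<not> ereal (real_of_int y) \<le> mlo N a n" using D_up(1)[OF hN ha hm hn True] .
    show ?thesis
    proof (rule that)
      show "((\<lambda>s. Uf \<beta> N v a n y s) has_real_derivative - (\<beta> * (pf \<beta> N v a y t - pf \<beta> N v a (y - 1) t))) (at t within {0..1})"
        unfolding \<open>(\<lambda>s. Uf \<beta> N v a n y s) = _\<close> by (rule DERIVINT[OF cont t01])
    qed (use nl in simp_all)
  next
    case False
    note F = False
    show ?thesis
    proof (cases "ereal (real_of_int y) \<le> mlo N a n")
      case True
      have "(\<lambda>s. Uf \<beta> N v a n y s) = (\<lambda>s. U1 N v a n y + \<beta> * integral {s..1} (\<lambda>r. pf \<beta> N v a (y + 1) r - pf \<beta> N v a y r))"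
        using True F by (simp add: Uf_def)
      show ?thesis
      proof (rule that)
        show "((\<lambda>s. Uf \<beta> N v a n y s) has_real_derivative - (\<beta> * (pf \<beta> N v a (y + 1) t - pf \<beta> N v a y t))) (at t within {0..1})"
          unfolding \<open>(\<lambda>s. Uf \<beta> N v a n y s) = _\<close> by (rule DERIVINT[OF cont t01])
      qed (use F in simp_all)
    next
      case False
      have "(\<lambda>s. Uf \<beta> N v a n y s) = (\<lambda>s. U1 N v a n y)"
        using False F by (simp add: Uf_def)
      show ?thesis
      proof (rule that[of 0])
        show "((\<lambda>s. Uf \<beta> N v a n y s) has_real_derivative 0) (at t within {0..1})"
          unfolding \<open>(\<lambda>s. Uf \<beta> N v a n y s) = _\<close> by (rule DERIV_const)
      qed (use F False in simp_all)
    qed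
  qed
  have A: "D + \<beta> * (Uf \<beta> N v a n (y + 1) t - 2 * Uf \<beta> N v a n y t + Uf \<beta> N v a n (y - 1) t) = 0"
    if "mup N a n < ereal (real_of_int y) \<or> ereal (real_of_int y) < mlo N a n"
    using that
  proof
    assume h: "mup N a n < ereal (real_of_int y)"
    have h1: "mup N a n \<le> ereal (real_of_int y)" using h by simp
    have h2: "mup N a n \<le> ereal (real_of_int (y - 1))" using D_gt[OF hN ha hm hn h] .
    have s2: "Uf \<beta> N v a n (y - 1) t - Uf \<beta> N v a n y t = v n - pf \<beta> N v a (y - 1) t"
      using DU[OF h2] by simp
    have S: "Uf \<beta> N v a n (y + 1) t - 2 * Uf \<beta> N v a n y t + Uf \<beta> N v a n (y - 1) t = pf \<beta> N v a y t - pf \<beta> N v a (y - 1) t"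
      using DU[OF h1] s2 by linarith
    show ?thesis unfolding S Dup[OF h1] by (simp add: algebra_simps)
  next
    assume h: "ereal (real_of_int y) < mlo N a n"
    have h1: "ereal (real_of_int y) \<le> mlo N a n" using h by simp
    have h2: "ereal (real_of_int (y + 1)) \<le> mlo N a n" using D_lt[OF hN ha hm hn h] .
    have s2: "Uf \<beta> N v a n (y + 1) t - Uf \<beta> N v a n y t = pf \<beta> N v a (y + 1) t - v n"
      using DL[OF h2] by simp
    have S: "Uf \<beta> N v a n (y + 1) t - 2 * Uf \<beta> N v a n y t + Uf \<beta> N v a n (y - 1) t = pf \<beta> N v a (y + 1) t - pf \<beta> N v a y t"
      using DL[OF h1] s2 by linarith
    show ?thesis unfolding S Dlo[OF h1] by (simp add: algebra_simps)
  qed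
  have B: "D + \<beta> * (Uf \<beta> N v a n (y + 1) t - 2 * Uf \<beta> N v a n y t + Uf \<beta> N v a n (y - 1) t)
                = (pf \<beta> N v a (y - 1) t - v n) * \<beta>"
    if h: "ereal (real_of_int y) = mup N a n"
  proof -
    have h1: "mup N a n \<le> ereal (real_of_int y)" using h by simp
    have S: "Uf \<beta> N v a n (y + 1) t - 2 * Uf \<beta> N v a n y t + Uf \<beta> N v a n (y - 1) t = pf \<beta> N v a y t - v n"
      using DU[OF h1] EQ[OF h] by linarith
    show ?thesis unfolding S Dup[OF h1] by (simp add: algebra_simps)
  qed
  have C: "D + \<beta> * (Uf \<beta> N v a n (y + 1) t - 2 * Uf \<beta> N v a n y t + Uf \<beta> N v a n (y - 1) t)
                = (v n - pf \<beta> N v a (y + 1) t) * \<beta>"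
    if h: "ereal (real_of_int y) = mlo N a n"
  proof -
    have h1: "ereal (real_of_int y) \<le> mlo N a n" using h by simp
    have h2: "ereal (real_of_int (y + 1)) = mup N a n" using D_mid2[OF hN ha hm hn h] .
    have e: "Uf \<beta> N v a n (y + 1) t = Uf \<beta> N v a n y t"
      using EQ[OF h2] by simp
    have S: "Uf \<beta> N v a n (y + 1) t - 2 * Uf \<beta> N v a n y t + Uf \<beta> N v a n (y - 1) t = v n - pf \<beta> N v a y t"
      using DL[OF h1] e by linarith
    show ?thesis unfolding S Dlo[OF h1] by (simp add: algebra_simps)
  qed
  show "(\<exists>D. ((\<lambda>s. Uf \<beta> N v a n y s) has_real_derivative D) (at t within {0..1})
         \<and> ((mup N a n < ereal (real_of_int y) \<or> ereal (real_of_int y) < mlo N a n) \<longrightarrow>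
              D + \<beta> * (Uf \<beta> N v a n (y + 1) t - 2 * Uf \<beta> N v a n y t + Uf \<beta> N v a n (y - 1) t) = 0)
         \<and> (ereal (real_of_int y) = mup N a n \<longrightarrow>
              D + \<beta> * (Uf \<beta> N v a n (y + 1) t - 2 * Uf \<beta> N v a n y t + Uf \<beta> N v a n (y - 1) t)
                = (pf \<beta> N v a (y - 1) t - v n) * \<beta>)
         \<and> (ereal (real_of_int y) = mlo N a n \<longrightarrow>
              D + \<beta> * (Uf \<beta> N v a n (y + 1) t - 2 * Uf \<beta> N v a n y t + Uf \<beta> N v a n (y - 1) t)
                = (v n - pf \<beta> N v a (y + 1) t) * \<beta>))
      \<and> (ereal (real_of_int y) \<ge> mup N a n \<longrightarrow>
           Uf \<beta> N v a n y t - Uf \<beta> N v a n (y + 1) t - (v n - pf \<beta> N v a y t) = 0)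
      \<and> (ereal (real_of_int y) \<le> mlo N a n \<longrightarrow>
           Uf \<beta> N v a n y t - Uf \<beta> N v a n (y - 1) t + (v n - pf \<beta> N v a y t) = 0)"
  proof (intro conjI impI exI[of _ D])
    show "((\<lambda>s. Uf \<beta> N v a n y s) has_real_derivative D) (at t within {0..1})" by (rule HD)
  qed (use A B C DU[of y] DL[of y] in simp_all)
qed


end
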